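(* Let $G$ be a group and let $\{\mathrm{id}\}=H_0\subset H_1\subset\cdots\subset H_k$ be a nested sequence of subgroups of $G$. Let $A$ be a finite symmetric subset of $G$ and set $A_i:=A^2\cap H_i$ for $i=0,\dots,k$. Assume that $\langle A_{i+1}\rangle \not\subseteq A_{i+1}H_i$ for every $i=0,\dots,k-1$. Then $|A^5|\geq k|A|$.
   Context: A subset $A$ is symmetric if $\mathrm{id}\in A$ and $a^{-1}\in A$ whenever $a\in A$. $A^n$ denotes the $n$-fold product set, $\langle B\rangle$ the subgroup generated by $B$, and $A_{i+1}H_i=\{ah : a\in A_{i+1}, h\in H_i\}$. *)

theory Defs
  imports "HOL-Algebra.Algebra"
begin

fun setpow :: "('a, 'b) monoid_scheme \<Rightarrow> 'a set \<Rightarrow> nat \<Rightarrow> 'a set" where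
  "setpow G A 0 = {\<one>\<^bsub>G\<^esub>}"
| "setpow G A (Suc n) = A <#>\<^bsub>G\<^esub> setpow G A n"

definition symmetric_set :: "('a, 'b) monoid_scheme \<Rightarrow> 'a set \<Rightarrow> bool" where
  "symmetric_set G A \<longleftrightarrow> A \<subseteq> carrier G \<and> \<one>\<^bsub>G\<^esub> \<in> A \<and> (\<forall>a\<in>A. inv\<^bsub>G\<^esub> a \<in> A)"

end

theory Submission
  imports Defs
begin

lemma setmult_mem: "x \<in> A <#>\<^bsub>G\<^esub> B \<longleftrightarrow> (\<exists>a\<in>A. \<exists>b\<in>B. x = a \<otimes>\<^bsub>G\<^esub> b)"
  by (auto simp: set_mult_def)

lemma setpow_carrier: "monoid G \<Longrightarrow> A \<subseteq> carrier G \<Longrightarrow> setpow G A n \<subseteq> carrier G"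
  by (induction n) (auto simp: set_mult_def intro!: monoid.m_closed)

lemma setpow_finite: "finite A \<Longrightarrow> finite (setpow G A n)"
  by (induction n) (auto simp: set_mult_def)

lemma setpow_mult:
  assumes "monoid G" "A \<subseteq> carrier G"
  shows "p \<in> setpow G A m \<Longrightarrow> q \<in> setpow G A n \<Longrightarrow> p \<otimes>\<^bsub>G\<^esub> q \<in> setpow G A (m+n)"
proof (induction m arbitrary: p)
  case 0
  then show ?case using setpow_carrier[OF assms, of n] assms(1) by (auto simp: monoid.l_one)
next
  case (Suc m)
  then obtain a p' where a: "a \<in> A" "p' \<in> setpow G A m" "p = a \<otimes>\<^bsub>G\<^esub> p'"
    by (auto simp: setmult_mem)
  have "p \<otimes>\<^bsub>G\<^esub> q = a \<otimes>\<^bsub>G\<^esub> (p' \<otimes>\<^bsub>G\<^esub> q)"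
    using a Suc.prems setpow_carrier[OF assms] assms
    by (meson monoid.m_assoc subsetD)
  then show ?case using Suc.IH[OF a(2) Suc.prems(2)] a(1) by (auto simp: setmult_mem)
qed

lemma setpow2: "monoid G \<Longrightarrow> A \<subseteq> carrier G \<Longrightarrow>
   setpow G A 2 = {a \<otimes>\<^bsub>G\<^esub> b | a b. a\<in>A \<and> b\<in>A}"
  by (auto simp: numeral_2_eq_2 set_mult_def monoid.r_one subsetD)

lemma setpow1: "monoid G \<Longrightarrow> A \<subseteq> carrier G \<Longrightarrow> a \<in> A \<Longrightarrow> a \<in> setpow G A 1"
  by (auto simp: set_mult_def monoid.r_one subsetD intro!: bexI[of _ a])

declare setpow.simps[simp del]

theorem lemma3p1:
  fixes G :: "('a, 'b) monoid_scheme" and H :: "nat \<Rightarrow> 'a set" and A :: "'a set" and k :: nat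
  assumes "group G"
    and "H 0 = {\<one>\<^bsub>G\<^esub>}"
    and "\<And>i. i \<le> k \<Longrightarrow> subgroup (H i) G"
    and "\<And>i. i < k \<Longrightarrow> H i \<subseteq> H (Suc i)"
    and "finite A" and "symmetric_set G A"
    and "\<And>i. i < k \<Longrightarrow>
           \<not> generate G (setpow G A 2 \<inter> H (Suc i))
               \<subseteq> (setpow G A 2 \<inter> H (Suc i)) <#>\<^bsub>G\<^esub> H i"
  shows "card (setpow G A 5) \<ge> k * card A"
proof -
  interpret group G by fact
  have Ac: "A \<subseteq> carrier G" and oneA: "\<one>\<^bsub>G\<^esub> \<in> A" and invA: "\<And>a. a \<in> A \<Longrightarrow> inv\<^bsub>G\<^esub> a \<in> A"
    using assms(6) unfolding symmetric_set_def by auto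
  define A2 where "A2 = setpow G A 2"
  have A2eq: "A2 = {a \<otimes>\<^bsub>G\<^esub> b | a b. a\<in>A \<and> b\<in>A}"
    unfolding A2_def using setpow2[OF monoid_axioms Ac] .
  have A2c: "A2 \<subseteq> carrier G" using A2eq Ac by auto
  have one2: "\<one>\<^bsub>G\<^esub> \<in> A2" using A2eq oneA by force
  have inv2: "inv\<^bsub>G\<^esub> p \<in> A2" if pA: "p \<in> A2" for p
  proof -
    obtain a b where ab: "a \<in> A" "b \<in> A" "p = a \<otimes>\<^bsub>G\<^esub> b" using pA A2eq by auto
    then have "inv\<^bsub>G\<^esub> p = inv\<^bsub>G\<^esub> b \<otimes>\<^bsub>G\<^esub> inv\<^bsub>G\<^esub> a" using Ac by (simp add: inv_mult_group subsetD)
    then show ?thesis using ab invA A2eq by auto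
  qed
  have Hmono: "H i \<subseteq> H j" if "i \<le> j" "j \<le> k" for i j
    using that
  proof (induction j rule: dec_induct)
    case base then show ?case by simp
  next
    case (step n) then show ?case using assms(4)[of n] by auto
  qed
  have Hc: "H i \<subseteq> carrier G" if "i \<le> k" for i
    using assms(3)[OF that] subgroup.subset by blast
  have ex: "\<exists>x. x \<in> setpow G A 4 \<and> x \<in> H (Suc i) \<and> x \<notin> (A2 \<inter> H (Suc i)) <#>\<^bsub>G\<^esub> H i"
    if ik: "i < k" for i
  proof (rule ccontr)
    assume nx: "\<not> ?thesis"
    define B where "B = A2 \<inter> H (Suc i)"
    define S where "S = B <#>\<^bsub>G\<^esub> H i"
    have sgS: "subgroup (H (Suc i)) G" "subgroup (H i) G" using assms(3) ik by auto
    have Bc: "B \<subseteq> carrier G" using A2c B_def by auto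
    have Sc: "S \<subseteq> carrier G" using Bc Hc[of i] ik unfolding S_def by (auto simp: set_mult_def)
    have inclS: "h \<otimes>\<^bsub>G\<^esub> s \<in> S" if hs: "h \<in> B" "s \<in> S" for h s
    proof -
      obtain c t where ct: "c \<in> B" "t \<in> H i" "s = c \<otimes>\<^bsub>G\<^esub> t"
        using hs(2) unfolding S_def by (auto simp: setmult_mem)
      have hc: "h \<in> carrier G" "c \<in> carrier G" "t \<in> carrier G"
        using hs(1) ct Bc Hc[of i] ik by auto
      have "h \<otimes>\<^bsub>G\<^esub> c \<in> setpow G A (2+2)"
        by (rule setpow_mult[OF monoid_axioms Ac]) (use hs(1) ct(1) in \<open>auto simp: B_def A2_def\<close>)
      moreover have "h \<otimes>\<^bsub>G\<^esub> c \<in> H (Suc i)" using hs(1) ct(1) sgS(1) unfolding B_def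
        by (auto intro: subgroup.m_closed)
      ultimately have "h \<otimes>\<^bsub>G\<^esub> c \<in> S" using nx unfolding S_def B_def by (simp del: setpow.simps)
      then obtain c' t' where ct': "c' \<in> B" "t' \<in> H i" "h \<otimes>\<^bsub>G\<^esub> c = c' \<otimes>\<^bsub>G\<^esub> t'"
        unfolding S_def by (auto simp: setmult_mem)
      have "h \<otimes>\<^bsub>G\<^esub> s = c' \<otimes>\<^bsub>G\<^esub> (t' \<otimes>\<^bsub>G\<^esub> t)"
      proof -
        have c'c: "c' \<in> carrier G" "t' \<in> carrier G" using ct' Bc Hc[of i] ik by auto
        have "h \<otimes>\<^bsub>G\<^esub> s = (h \<otimes>\<^bsub>G\<^esub> c) \<otimes>\<^bsub>G\<^esub> t" using ct(3) hc by (simp add: m_assoc)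
        also have "\<dots> = (c' \<otimes>\<^bsub>G\<^esub> t') \<otimes>\<^bsub>G\<^esub> t" using ct'(3) by simp
        also have "\<dots> = c' \<otimes>\<^bsub>G\<^esub> (t' \<otimes>\<^bsub>G\<^esub> t)" using c'c hc by (simp add: m_assoc)
        finally show ?thesis .
      qed
      moreover have "t' \<otimes>\<^bsub>G\<^esub> t \<in> H i" using ct ct' sgS(2) by (auto intro: subgroup.m_closed)
      ultimately show ?thesis using ct'(1) unfolding S_def by (auto simp: setmult_mem)
    qed
    have B_inv: "inv\<^bsub>G\<^esub> h \<in> B" if "h \<in> B" for h
      using that inv2 sgS(1) unfolding B_def by (auto intro: subgroup.m_inv_closed)
    have gen: "\<forall>s\<in>S. g \<otimes>\<^bsub>G\<^esub> s \<in> S" if "g \<in> generate G B" for g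
      using that
    proof (induction rule: generate.induct)
      case one then show ?case using Sc by auto
    next
      case (incl h) then show ?case using inclS by auto
    next
      case (inv h) then show ?case using inclS B_inv by auto
    next
      case (eng h1 h2)
      have "h1 \<in> carrier G" "h2 \<in> carrier G"
        using eng.hyps generate_in_carrier[OF Bc] by auto
      then show ?case using eng.IH Sc by (auto simp: m_assoc subsetD)
    qed
    have oneS: "\<one>\<^bsub>G\<^esub> \<in> S"
    proof -
      have "\<one>\<^bsub>G\<^esub> \<in> B" using one2 sgS(1) unfolding B_def by (auto intro: subgroup.one_closed)
      moreover have "\<one>\<^bsub>G\<^esub> \<in> H i" using sgS(2) by (auto intro: subgroup.one_closed)
      moreover have "\<one>\<^bsub>G\<^esub> = \<one>\<^bsub>G\<^esub> \<otimes>\<^bsub>G\<^esub> \<one>\<^bsub>G\<^esub>" by simp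
      ultimately show ?thesis unfolding S_def setmult_mem by blast
    qed
    have "generate G B \<subseteq> S"
    proof
      fix g assume g: "g \<in> generate G B"
      then have "g \<otimes>\<^bsub>G\<^esub> \<one>\<^bsub>G\<^esub> \<in> S" using gen oneS by auto
      then show "g \<in> S" using generate_in_carrier[OF Bc g] by simp
    qed
    then show False using assms(7)[OF ik] unfolding S_def B_def A2_def by auto
  qed
  then obtain x where x: "\<And>i. i < k \<Longrightarrow> x i \<in> setpow G A 4 \<and> x i \<in> H (Suc i)
        \<and> x i \<notin> (A2 \<inter> H (Suc i)) <#>\<^bsub>G\<^esub> H i"
    by metis
  have A4c: "setpow G A 4 \<subseteq> carrier G" using setpow_carrier[OF monoid_axioms Ac] .
  define F where "F i = (\<lambda>a. a \<otimes>\<^bsub>G\<^esub> x i) ` A" for i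
  have F5: "F i \<subseteq> setpow G A 5" if "i < k" for i
  proof
    fix y assume "y \<in> F i"
    then obtain a where a: "a \<in> A" "y = a \<otimes>\<^bsub>G\<^esub> x i" unfolding F_def by auto
    have "a \<in> setpow G A 1" using setpow1[OF monoid_axioms Ac a(1)] .
    then have "a \<otimes>\<^bsub>G\<^esub> x i \<in> setpow G A (1+4)"
      using setpow_mult[OF monoid_axioms Ac] x[OF that] by blast
    then show "y \<in> setpow G A 5" using a by simp
  qed
  have cardF: "card (F i) = card A" if "i < k" for i
  proof -
    have "inj_on (\<lambda>a. a \<otimes>\<^bsub>G\<^esub> x i) A"
      using x[OF that] A4c Ac by (auto simp: inj_on_def subsetD)
    then show ?thesis unfolding F_def by (rule card_image)
  qed
  have disj: "F i \<inter> F j = {}" if ij: "i < j" "j < k" for i j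
  proof (rule ccontr)
    assume "F i \<inter> F j \<noteq> {}"
    then obtain a b where ab: "a \<in> A" "b \<in> A" "a \<otimes>\<^bsub>G\<^esub> x i = b \<otimes>\<^bsub>G\<^esub> x j"
      unfolding F_def by auto
    have xc: "x i \<in> carrier G" "x j \<in> carrier G" using x ij A4c by auto
    have abc: "a \<in> carrier G" "b \<in> carrier G" using ab Ac by auto
    define c where "c = inv\<^bsub>G\<^esub> b \<otimes>\<^bsub>G\<^esub> a"
    have c2: "c \<in> A2" unfolding c_def using A2eq ab invA by auto
    have xj: "x j = c \<otimes>\<^bsub>G\<^esub> x i" unfolding c_def using ab(3) xc abc
      by (metis inv_solve_left m_assoc m_closed inv_closed)
    have "c = x j \<otimes>\<^bsub>G\<^esub> inv\<^bsub>G\<^esub> (x i)" using xj xc c2 A2c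
      by (metis inv_solve_right subsetD)
    moreover have "x i \<in> H (Suc j)" using x[of i] ij Hmono[of "Suc i" "Suc j"] by auto
    moreover have "x j \<in> H (Suc j)" using x[of j] ij by auto
    ultimately have cH: "c \<in> H (Suc j)" using assms(3)[of "Suc j"] ij
      by (auto intro: subgroup.m_closed subgroup.m_inv_closed)
    have "x i \<in> H j" using x[of i] ij Hmono[of "Suc i" j] by auto
    then have "x j \<in> (A2 \<inter> H (Suc j)) <#>\<^bsub>G\<^esub> H j" using xj c2 cH by (auto simp: setmult_mem)
    then show False using x[of j] ij by auto
  qed
  have "card (\<Union>i<k. F i) = (\<Sum>i<k. card (F i))"
  proof (rule card_UN_disjoint)
    show "finite {..<k}" by simp
    show "\<forall>i\<in>{..<k}. finite (F i)" using assms(5) unfolding F_def by auto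
    show "\<forall>i\<in>{..<k}. \<forall>j\<in>{..<k}. i \<noteq> j \<longrightarrow> F i \<inter> F j = {}"
      using disj by (metis Int_commute lessThan_iff linorder_neqE_nat)
  qed
  also have "\<dots> = k * card A" using cardF by simp
  finally have "card (\<Union>i<k. F i) = k * card A" .
  moreover have "card (\<Union>i<k. F i) \<le> card (setpow G A 5)"
    using F5 setpow_finite[OF assms(5)] by (intro card_mono) auto
  ultimately show ?thesis by simp
qed

end
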